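(* There exists a constant $c>0$, independent of $n$, such that for all sufficiently large $n$, \[ \zeta_n> -c+\frac{\min\{1-\beta,\alpha\}}{\lambda_1}\log n . \]
   Context: Fix constants $r_0,d_0\ge 0$ with $\lambda_0:=r_0-d_0<0$, $d_1>0$, $k>1$, $\alpha\in(0,1)$, $\beta\in(0,1)$. Let $f:[0,\infty)^2\to[0,\infty)$ satisfy: (A1) $f$ is Lipschitz continuous; (A2) $f(x,y)=r_1$ when $x+y=0$ and $f(x,y)=d_1$ when $x+y=1$, where $r_1:=f(0,0)>d_1$; (A3) $f(x,y)=\Phi(x+y)$ for some non-increasing function $\Phi:[0,\infty)\to[0,\infty)$; (A4) $f(x,y)\to0$ as $x\to\infty$ and as $y\to\infty$; (A5) $f(x,y)\ge \lambda_1(1-(x+y))+d_1$ for all $x,y\ge0$, where $\lambda_1:=r_1-d_1>0$. Put $\phi(x,y):=f(x,y)-d_1$. For each integer $n\ge1$ let $K=K(n):=kn$ and let $(y_0,y_1,y_\beta)$ solve \[ \dot y_0=\lambda_0 y_0,\qquad \dot y_1=\phi(y_0,y_1)\,y_1+n^{-\alpha}y_0,\qquad \dot y_\beta=\phi(y_0,y_1)\,y_\beta, \] with $(y_0(0),y_1(0),y_\beta(0))=(n/K,\,n^\beta/K,\,n^\beta/K)$. Define the deterministic recurrence time $\zeta_n:=\inf\{t>0: y_1(t)=n/K\}$. *)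

theory Defs
  imports "HOL-Analysis.Analysis"
begin

text \<open>Deterministic recurrence time: infimum over the extended reals, so that
  the infimum of the empty set is +infinity.\<close>
definition recurrence_time :: "(real \<Rightarrow> real) \<Rightarrow> real \<Rightarrow> ereal" where
  "recurrence_time y1 a = Inf (ereal ` {t. t > 0 \<and> y1 t = a})"

end

theory Submission imports Defs begin

lemma y0_explicit:
  fixes l0 k :: real and Y0 :: "real \<Rightarrow> real"
  assumes ode0: "\<forall>t\<ge>0. (Y0 has_real_derivative l0 * Y0 t) (at t within {0..})"
    and i0: "Y0 0 = 1/k"
    and t: "t \<ge> 0"
  shows "Y0 t = exp (l0 * t) / k"
proof -
  have "\<exists>c. \<forall>x\<in>{0::real..}. Y0 x * exp (- l0 * x) = c"
  proof (rule has_field_derivative_zero_constant)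
    fix x :: real assume x: "x \<in> {0..}"
    have "((\<lambda>x. Y0 x * exp (- l0 * x)) has_real_derivative
        (l0 * Y0 x) * exp (- l0 * x) + Y0 x * (exp (- l0 * x) * (- l0 * 1))) (at x within {0..})"
      using ode0 x by (auto intro!: derivative_eq_intros)
    then show "((\<lambda>x. Y0 x * exp (- l0 * x)) has_real_derivative 0) (at x within {0..})"
      by (simp add: algebra_simps)
  qed simp
  then obtain c where c: "\<And>x. x \<ge> 0 \<Longrightarrow> Y0 x * exp (- l0 * x) = c" by auto
  have "c = 1/k" using c[of 0] i0 by simp
  then have "Y0 t * exp (- l0 * t) = 1/k" using c t by simp
  moreover have "Y0 t = Y0 t * exp (- l0 * t) * exp (l0 * t)"
    by (simp add: mult.assoc flip: exp_add)
  ultimately show ?thesis by simp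
qed

lemma y1_bound:
  fixes l0 l1 a b k d1 t1 :: real and Y0 Y1 :: "real \<Rightarrow> real" and f :: "real \<Rightarrow> real \<Rightarrow> real"
  assumes l0: "l0 < 0" and l1: "l1 > 0" and a: "a \<ge> 0" and k: "k > 0" and b: "b \<ge> 0"
    and hf: "\<forall>x y. 0 \<le> x \<longrightarrow> 0 \<le> y \<longrightarrow> f x y \<le> l1 + d1"
    and ode0: "\<forall>t\<ge>0. (Y0 has_real_derivative l0 * Y0 t) (at t within {0..})"
    and ode1: "\<forall>t\<ge>0. (Y1 has_real_derivative (f (Y0 t) (Y1 t) - d1) * Y1 t + a * Y0 t) (at t within {0..})"
    and i0: "Y0 0 = 1/k" and i1: "Y1 0 = b" and t1: "t1 > 0" and h1: "Y1 t1 = 1/k"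
  shows "exp (- (l1 * t1)) / k \<le> b + a / (k * l1)"
proof -
  have Y0e: "Y0 t = exp (l0 * t) / k" if "t \<ge> 0" for t
    using y0_explicit[OF ode0 i0 that] .
  have Y0nn: "Y0 t \<ge> 0" if "t \<ge> 0" for t using Y0e[OF that] k by simp
  have Y0le: "Y0 t \<le> 1/k" if "t \<ge> 0" for t
  proof -
    have "exp (l0 * t) \<le> 1" using l0 that by (simp add: mult_nonpos_nonneg)
    then show ?thesis using Y0e[OF that] k by (simp add: divide_right_mono)
  qed
  define g where "g t = exp (- (l1 * t)) * (Y1 t + a / (k * l1))" for t
  define G where "G t = exp (- (l1 * t)) * ((f (Y0 t) (Y1 t) - d1 - l1) * Y1 t + a * Y0 t - a / k)" for t
  have gd: "(g has_real_derivative G t) (at t within {0..})" if "t \<ge> 0" for t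
  proof -
    have "(g has_real_derivative exp (- (l1 * t)) * (- (l1 * 1)) * (Y1 t + a / (k * l1))
        + exp (- (l1 * t)) * ((f (Y0 t) (Y1 t) - d1) * Y1 t + a * Y0 t)) (at t within {0..})"
      unfolding g_def using ode1 that by (auto intro!: derivative_eq_intros)
    moreover have "exp (- (l1 * t)) * (- (l1 * 1)) * (Y1 t + a / (k * l1))
        + exp (- (l1 * t)) * ((f (Y0 t) (Y1 t) - d1) * Y1 t + a * Y0 t) = G t"
      unfolding G_def using l1 k by (simp add: algebra_simps)
    ultimately show ?thesis by simp
  qed
  have contY1: "continuous_on {0..} Y1"
    unfolding continuous_on_eq_continuous_within using ode1 by (auto intro: DERIV_continuous)
  have contg: "continuous_on {0..} g"
    unfolding continuous_on_eq_continuous_within using gd by (auto intro: DERIV_continuous)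
  define S where "S = ({0..t1} \<inter> Y1 -` {..0}) \<union> {0}"
  have clS: "closed S" unfolding S_def
    by (intro closed_Un continuous_closed_preimage continuous_on_subset[OF contY1]) auto
  have bS: "bdd_above S" unfolding S_def using t1 by (auto intro!: bdd_aboveI[of _ t1])
  define s where "s = Sup S"
  have sS: "s \<in> S" unfolding s_def by (rule closed_contains_Sup) (use clS bS in \<open>auto simp: S_def\<close>)
  have sle: "x \<le> s" if "x \<in> S" for x unfolding s_def using bS that by (simp add: cSup_upper)
  have s0: "s \<ge> 0" using sle[of 0] by (simp add: S_def)
  have st1: "s < t1"
  proof -
    have "s \<le> t1" using sS t1 by (auto simp: S_def)
    moreover have "s \<noteq> t1" using sS t1 h1 k by (auto simp: S_def)
    ultimately show ?thesis by simp
  qed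
  have pos: "Y1 x > 0" if "s < x" "x \<le> t1" for x
  proof (rule ccontr)
    assume "\<not> Y1 x > 0"
    then have "x \<in> S" using that s0 by (auto simp: S_def)
    then show False using sle that by fastforce
  qed
  have gs: "g s \<le> b + a / (k * l1)"
  proof (cases "s = 0")
    case True then show ?thesis by (simp add: g_def i1)
  next
    case False
    then have "Y1 s \<le> 0" using sS by (auto simp: S_def)
    have "g s \<le> exp (- (l1 * s)) * (a / (k * l1))"
      unfolding g_def using \<open>Y1 s \<le> 0\<close> by (intro mult_left_mono) auto
    also have "\<dots> \<le> 1 * (a / (k * l1))"
      using l1 s0 a k by (intro mult_right_mono) (auto simp: mult_nonneg_nonneg)
    finally show ?thesis using b by simp
  qed
  have "g t1 \<le> g s"
  proof (rule DERIV_nonpos_imp_decreasing_open[of s t1 g])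
    show "s \<le> t1" using st1 by simp
    show "continuous_on {s..t1} g" by (rule continuous_on_subset[OF contg]) (use s0 in auto)
    fix x assume x: "s < x" "x < t1"
    have x0: "x > 0" using x s0 by simp
    have "at x within {0..} = at x" by (rule at_within_interior) (use x0 in auto)
    then have "(g has_real_derivative G x) (at x)" using gd[of x] x0 by simp
    moreover have "G x \<le> 0"
    proof -
      have yp: "Y1 x > 0" using pos x by simp
      have "f (Y0 x) (Y1 x) \<le> l1 + d1" using hf Y0nn[of x] yp x0 by auto
      then have "(f (Y0 x) (Y1 x) - d1 - l1) * Y1 x \<le> 0" using yp by (simp add: mult_nonpos_nonneg)
      moreover have "a * Y0 x \<le> a / k" using Y0le[of x] x0 a
        using mult_left_mono[of "Y0 x" "1/k" a] by simp
      ultimately have "(f (Y0 x) (Y1 x) - d1 - l1) * Y1 x + a * Y0 x - a / k \<le> 0" by linarith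
      then show ?thesis unfolding G_def by (rule mult_nonneg_nonpos[OF less_imp_le[OF exp_gt_zero]])
    qed
    ultimately show "\<exists>y. (g has_real_derivative y) (at x) \<and> y \<le> 0" by blast
  qed
  moreover have "exp (- (l1 * t1)) / k \<le> g t1"
  proof -
    have "0 \<le> a / (k * l1)" using a k l1 by simp
    then have "1/k \<le> 1/k + a / (k * l1)" by simp
    then have "exp (- (l1 * t1)) * (1/k) \<le> exp (- (l1 * t1)) * (1/k + a / (k * l1))"
      by (rule mult_left_mono) simp
    then show ?thesis unfolding g_def h1 by simp
  qed
  ultimately show ?thesis using gs by linarith
qed

theorem lemmaA2:
  fixes r0 d0 d1 k \<alpha> \<beta> :: real
    and f :: "real \<Rightarrow> real \<Rightarrow> real"
    and y0 y1 y\<beta> :: "nat \<Rightarrow> real \<Rightarrow> real"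
  assumes r0: "r0 \<ge> 0" and d0: "d0 \<ge> 0" and lam0: "r0 - d0 < 0"
    and d1: "d1 > 0" and k: "k > 1"
    and \<alpha>: "0 < \<alpha>" "\<alpha> < 1" and \<beta>: "0 < \<beta>" "\<beta> < 1"
    and f_nonneg: "\<forall>x y. 0 \<le> x \<longrightarrow> 0 \<le> y \<longrightarrow> 0 \<le> f x y"
    and A1: "\<exists>L. L-lipschitz_on ({0..} \<times> {0..}) (\<lambda>(x, y). f x y)"
    and A2a: "\<forall>x y. 0 \<le> x \<longrightarrow> 0 \<le> y \<longrightarrow> x + y = 0 \<longrightarrow> f x y = f 0 0"
    and A2b: "\<forall>x y. 0 \<le> x \<longrightarrow> 0 \<le> y \<longrightarrow> x + y = 1 \<longrightarrow> f x y = d1"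
    and A2c: "f 0 0 > d1"
    and A3: "\<exists>\<Phi> :: real \<Rightarrow> real. (\<forall>s t. 0 \<le> s \<longrightarrow> s \<le> t \<longrightarrow> \<Phi> t \<le> \<Phi> s)
               \<and> (\<forall>s \<ge> 0. 0 \<le> \<Phi> s)
               \<and> (\<forall>x y. 0 \<le> x \<longrightarrow> 0 \<le> y \<longrightarrow> f x y = \<Phi> (x + y))"
    and A4x: "\<forall>y \<ge> 0. ((\<lambda>x. f x y) \<longlongrightarrow> 0) at_top"
    and A4y: "\<forall>x \<ge> 0. ((\<lambda>y. f x y) \<longlongrightarrow> 0) at_top"
    and A5: "\<forall>x y. 0 \<le> x \<longrightarrow> 0 \<le> y \<longrightarrow> f x y \<ge> (f 0 0 - d1) * (1 - (x + y)) + d1"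
    and ode0: "\<forall>n \<ge> 1. \<forall>t \<ge> 0.
       (y0 n has_real_derivative (r0 - d0) * y0 n t) (at t within {0..})"
    and ode1: "\<forall>n \<ge> 1. \<forall>t \<ge> 0.
       (y1 n has_real_derivative
          (f (y0 n t) (y1 n t) - d1) * y1 n t + real n powr (-\<alpha>) * y0 n t) (at t within {0..})"
    and odeb: "\<forall>n \<ge> 1. \<forall>t \<ge> 0.
       (y\<beta> n has_real_derivative (f (y0 n t) (y1 n t) - d1) * y\<beta> n t) (at t within {0..})"
    and init: "\<forall>n \<ge> 1. y0 n 0 = real n / (k * real n)
                 \<and> y1 n 0 = real n powr \<beta> / (k * real n)
                 \<and> y\<beta> n 0 = real n powr \<beta> / (k * real n)"
  shows "\<exists>c > 0. \<forall>\<^sub>F n in sequentially.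
           recurrence_time (y1 n) (real n / (k * real n))
             > ereal (- c + min (1 - \<beta>) \<alpha> / (f 0 0 - d1) * ln (real n))"
proof -
  define l1 where "l1 = f 0 0 - d1"
  define m where "m = min (1 - \<beta>) \<alpha>"
  define C where "C = 1 + 1 / l1"
  define c where "c = ln C / l1 + 1"
  have l1: "l1 > 0" using A2c by (simp add: l1_def)
  have C1: "C > 1" using l1 by (simp add: C_def)
  have "ln C \<ge> 0" using C1 by simp
  then have c0: "c > 0" using l1 unfolding c_def by (simp add: add_nonneg_pos)
  have hf: "\<forall>x y. 0 \<le> x \<longrightarrow> 0 \<le> y \<longrightarrow> f x y \<le> l1 + d1"
  proof (intro allI impI)
    fix x y :: real assume xy: "0 \<le> x" "0 \<le> y"
    obtain \<Phi> :: "real \<Rightarrow> real" where mono: "\<forall>s t. 0 \<le> s \<longrightarrow> s \<le> t \<longrightarrow> \<Phi> t \<le> \<Phi> s"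
      and fe: "\<forall>x y. 0 \<le> x \<longrightarrow> 0 \<le> y \<longrightarrow> f x y = \<Phi> (x + y)" using A3 by blast
    have "f x y = \<Phi> (x + y)" using fe xy by blast
    also have "\<dots> \<le> \<Phi> 0" using mono xy by simp
    also have "\<dots> = f 0 0" using fe by simp
    finally show "f x y \<le> l1 + d1" by (simp add: l1_def)
  qed
  have key: "ereal (- c + m / l1 * ln (real n)) < recurrence_time (y1 n) (real n / (k * real n))"
    if n: "n \<ge> 1" for n :: nat
  proof -
    have nn: "real n \<ge> 1" using n by simp
    have kn: "real n / (k * real n) = 1 / k" using nn by simp
    define lo where "lo = m / l1 * ln (real n) - ln C / l1"
    have lo: "ereal lo \<le> ereal t" if t: "t > 0" "y1 n t = 1 / k" for t
    proof -
      have b: "exp (- (l1 * t)) / k \<le> real n powr \<beta> / (k * real n) + real n powr (-\<alpha>) / (k * l1)"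
        apply (rule y1_bound[of "r0 - d0" l1 "real n powr (-\<alpha>)" k "real n powr \<beta> / (k * real n)" f d1 "y0 n" "y1 n" t])
        using lam0 l1 k hf ode0 ode1 init n t kn by auto
      have "exp (- (l1 * t)) = k * (exp (- (l1 * t)) / k)" using k by simp
      also have "\<dots> \<le> k * (real n powr \<beta> / (k * real n) + real n powr (-\<alpha>) / (k * l1))"
        using b k by (intro mult_left_mono) auto
      also have "\<dots> = real n powr (\<beta> - 1) + real n powr (-\<alpha>) / l1"
        using k l1 nn by (simp add: field_simps powr_diff)
      also have "\<dots> \<le> real n powr (-m) + real n powr (-m) / l1"
        using nn l1 by (intro add_mono divide_right_mono powr_mono) (auto simp: m_def)
      also have "\<dots> = real n powr (-m) * C" by (simp add: C_def field_simps)
      finally have e: "exp (- (l1 * t)) \<le> real n powr (-m) * C" .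
      have "- (l1 * t) \<le> ln (real n powr (-m) * C)"
        using e C1 nn by (subst ln_ge_iff) auto
      also have "\<dots> = - m * ln (real n) + ln C"
        using C1 nn by (simp add: ln_mult ln_powr)
      finally have "m * ln (real n) - ln C \<le> l1 * t" by simp
      then have "(m * ln (real n) - ln C) / l1 \<le> t" using l1 by (simp add: divide_le_eq mult.commute)
      then show ?thesis by (simp add: lo_def diff_divide_distrib)
    qed
    have "ereal lo \<le> recurrence_time (y1 n) (real n / (k * real n))"
      unfolding recurrence_time_def kn by (rule Inf_greatest) (auto intro: lo)
    moreover have "ereal (- c + m / l1 * ln (real n)) < ereal lo" by (simp add: lo_def c_def)
    ultimately show ?thesis by (meson less_le_trans)
  qed
  show ?thesis
    apply (rule exI[of _ c])
    using c0 key by (auto simp: l1_def m_def eventually_sequentially)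
qed

end
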